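(* Let $s>1$ be an integer and $k\in\{1,2,\ldots,s-1\}$. Then the indexed family $\{A_\varepsilon\colon \varepsilon\in I^s,\ |\varepsilon|=k\}$ defines a partition of $I^{s-1}$; that is, the union of its members is $I^{s-1}$ and $A_\varepsilon\cap A_\gamma=\emptyset$ whenever $\varepsilon\neq\gamma$ (the empty set is allowed as a member).
   Context: Let $I=\{0,1\}$ and for $\varepsilon\in I^s$ let $|\varepsilon|=\sum_i\varepsilon_i$. Let $\alpha=(0,\ldots,0)$ and $\omega=(1,\ldots,1)$ in $I^s$. For $\varepsilon\in I^s\setminus\{\alpha,\omega\}$ there is a unique index $i=t(\varepsilon)\in\{1,\ldots,s-1\}$ with $\varepsilon_i\neq\varepsilon_{i+1}=\varepsilon_{i+2}=\cdots=\varepsilon_s$, and one sets $A_\varepsilon=\{\varepsilon_1\}\times\cdots\times\{\varepsilon_i\}\times I^{s-1-i}\subseteq I^{s-1}$. (Note that if $1\leqslant|\varepsilon|\leqslant s-1$ then $\varepsilon\notin\{\alpha,\omega\}$.) *)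

theory Defs
  imports Main
begin

text \<open>Elements of I^s are lists of length s with entries in {0,1};
  the (1-based) coordinate eps_i is the list entry eps ! (i - 1).\<close>

definition cube :: "nat \<Rightarrow> nat list set" where
  "cube s = {xs. length xs = s \<and> set xs \<subseteq> {0, 1}}"

definition weight :: "nat list \<Rightarrow> nat" where
  "weight e = sum_list e"

definition coord :: "nat list \<Rightarrow> nat \<Rightarrow> nat" where
  "coord e i = e ! (i - 1)"

definition tidx :: "nat list \<Rightarrow> nat" where
  "tidx e = (THE i. 1 \<le> i \<and> i \<le> length e - 1 \<and> coord e i \<noteq> coord e (i + 1) \<and>
               (\<forall>j. i + 1 \<le> j \<and> j \<le> length e \<longrightarrow> coord e j = coord e (length e)))"

definition Aset :: "nat list \<Rightarrow> nat list set" where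
  "Aset e = {x \<in> cube (length e - 1). \<forall>j. 1 \<le> j \<and> j \<le> tidx e \<longrightarrow> coord x j = coord e j}"

end

theory Submission
  imports Defs
begin

definition Ppred :: "nat list \<Rightarrow> nat \<Rightarrow> bool" where
  "Ppred e i = (1 \<le> i \<and> i \<le> length e - 1 \<and> coord e i \<noteq> coord e (i + 1) \<and>
               (\<forall>j. i + 1 \<le> j \<and> j \<le> length e \<longrightarrow> coord e j = coord e (length e)))"

lemma Ppred_unique: "Ppred e i \<Longrightarrow> Ppred e i' \<Longrightarrow> i = i'"
proof (rule ccontr)
  assume a: "Ppred e i" "Ppred e i'" "i \<noteq> i'"
  have "\<And>a b. Ppred e a \<Longrightarrow> Ppred e b \<Longrightarrow> a < b \<Longrightarrow> False"
  proof -
    fix a b assume h: "Ppred e a" "Ppred e b" "a < b"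
    have hb: "coord e b \<noteq> coord e (b+1)" "b \<le> length e - 1" using h(2) unfolding Ppred_def by blast+
    have ha: "\<forall>j. a + 1 \<le> j \<and> j \<le> length e \<longrightarrow> coord e j = coord e (length e)"
      using h(1) unfolding Ppred_def by blast
    have c1: "a + 1 \<le> b \<and> b \<le> length e" using h(3) hb(2) by linarith
    have c2: "a + 1 \<le> b + 1 \<and> b + 1 \<le> length e" using h(3) hb(2) h(2) unfolding Ppred_def by linarith
    have "coord e b = coord e (length e)" using ha c1 by blast
    moreover have "coord e (b+1) = coord e (length e)" using ha c2 by blast
    ultimately show False using hb(1) by argo
  qed
  with a show False by (metis nat_neq_iff)
qed

lemma tidx_eq: "Ppred e i \<Longrightarrow> tidx e = i"
proof -
  assume P: "Ppred e i"
  have "tidx e = (THE i. Ppred e i)" unfolding tidx_def Ppred_def by (rule refl)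
  also have "\<dots> = i" by (metis P Ppred_unique the_equality)
  finally show ?thesis .
qed

lemma cube_le1: "x \<in> cube s \<Longrightarrow> n < length x \<Longrightarrow> x ! n \<le> 1"
  unfolding cube_def using nth_mem by fastforce

lemma sum_list_const: "set e \<subseteq> {c} \<Longrightarrow> sum_list e = length e * c"
  by (induction e) auto

lemma Ppred_exists:
  assumes e: "e \<in> cube s" and w1: "1 \<le> weight e" and w2: "weight e \<le> s - 1"
  shows "\<exists>i. Ppred e i"
proof -
  have len: "length e = s" using e by (simp add: cube_def)
  define M where "M = {j \<in> {1..s-1}. coord e j \<noteq> coord e s}"
  have ne: "M \<noteq> {}"
  proof
    assume "M = {}"
    then have all: "\<forall>j\<in>{1..s-1}. coord e j = coord e s" unfolding M_def by auto
    have "s \<ge> 1"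
    proof (rule ccontr)
      assume "\<not> s \<ge> 1" then have "s = 0" by simp
      then have "e = []" using len by simp
      then show False using w1 by (simp add: weight_def)
    qed
    have "set e \<subseteq> {coord e s}"
    proof
      fix y assume "y \<in> set e"
      then obtain n where n: "n < length e" "e ! n = y" by (auto simp: in_set_conv_nth)
      show "y \<in> {coord e s}"
      proof (cases "Suc n = s")
        case True then have "n = s - 1" by simp
        then show ?thesis using n by (simp add: coord_def)
      next
        case False
        then have "Suc n \<in> {1..s-1}" using n len by auto
        then have "coord e (Suc n) = coord e s" using all by blast
        then show ?thesis using n by (simp add: coord_def)
      qed
    qed
    then have "sum_list e = s * coord e s" using sum_list_const len by metis
    moreover have "coord e s \<le> 1" using cube_le1[OF e] len \<open>s \<ge> 1\<close> by (simp add: coord_def)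
    ultimately have "weight e = 0 \<or> weight e = s" by (simp add: weight_def) (metis le_Suc_eq le_zero_eq mult_0_right mult_1_right)
    then show False using w1 w2 \<open>s \<ge> 1\<close> by auto
  qed
  have fin: "finite M" unfolding M_def by auto
  define i where "i = Max M"
  have iM: "i \<in> M" using Max_in[OF fin ne] i_def by simp
  have imax: "\<And>j. j \<in> M \<Longrightarrow> j \<le> i" using Max_ge[OF fin] i_def by simp
  have tail: "\<And>j. i + 1 \<le> j \<Longrightarrow> j \<le> s \<Longrightarrow> coord e j = coord e s"
  proof -
    fix j assume "i + 1 \<le> j" "j \<le> s"
    show "coord e j = coord e s"
    proof (rule ccontr)
      assume "coord e j \<noteq> coord e s"
      then have "j \<noteq> s" by auto
      then have "j \<in> M" using \<open>coord e j \<noteq> coord e s\<close> \<open>i + 1 \<le> j\<close> \<open>j \<le> s\<close> unfolding M_def by auto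
      then show False using imax \<open>i + 1 \<le> j\<close> by fastforce
    qed
  qed
  have "Ppred e i"
  proof -
    have "1 \<le> i \<and> i \<le> s - 1 \<and> coord e i \<noteq> coord e s" using iM unfolding M_def by auto
    moreover have "coord e (i+1) = coord e s" using tail[of "i+1"] calculation by linarith
    ultimately show ?thesis unfolding Ppred_def len using tail by metis
  qed
  then show ?thesis by blast
qed

lemma Ppred_shape:
  assumes e: "e \<in> cube s" and P: "Ppred e i"
  shows "e = take i e @ replicate (s - i) (1 - e ! (i - 1))"
proof -
  have len: "length e = s" using e by (simp add: cube_def)
  have i: "1 \<le> i" "i \<le> s - 1" "coord e i \<noteq> coord e (i+1)"
    "\<And>j. i + 1 \<le> j \<Longrightarrow> j \<le> s \<Longrightarrow> coord e j = coord e s"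
    using P unfolding Ppred_def len by blast+
  have "coord e (i+1) = coord e s" using i(4)[of "i+1"] i(1,2) by simp
  have b1: "e ! (i-1) \<le> 1" using cube_le1[OF e] i(1,2) len by simp
  have b2: "e ! i \<le> 1" using cube_le1[OF e] i(1,2) len by simp
  have ci: "e ! i = 1 - e ! (i - 1)" using i(3) b1 b2 by (simp add: coord_def)
  show ?thesis
  proof (rule nth_equalityI)
    show "length e = length (take i e @ replicate (s - i) (1 - e ! (i - 1)))" using len i(1,2) by simp
  next
    fix n assume n: "n < length e"
    show "e ! n = (take i e @ replicate (s - i) (1 - e ! (i - 1))) ! n"
    proof (cases "n < i")
      case True then show ?thesis using len i(1,2) by (simp add: nth_append)
    next
      case False
      have "coord e (Suc n) = coord e s" using i(4)[of "Suc n"] False n len by simp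
      moreover have "coord e (i+1) = coord e s" using i(4)[of "i+1"] i(1,2) by simp
      ultimately have "e ! n = e ! i" by (simp add: coord_def)
      then show ?thesis using False len i(1,2) n ci by (simp add: nth_append)
    qed
  qed
qed

definition mk :: "nat \<Rightarrow> nat list \<Rightarrow> nat \<Rightarrow> nat list" where
  "mk s x i = take i x @ replicate (s - i) (1 - x ! (i - 1))"

definition fx :: "nat \<Rightarrow> nat list \<Rightarrow> nat \<Rightarrow> nat" where
  "fx s x i = sum_list (take i x) + (s - i) * (1 - x ! (i - 1))"

lemma mk_props:
  assumes x: "x \<in> cube (s - 1)" and i: "1 \<le> i" "i \<le> s - 1"
  shows "mk s x i \<in> cube s" "Ppred (mk s x i) i" "tidx (mk s x i) = i"
    "x \<in> Aset (mk s x i)" "weight (mk s x i) = fx s x i"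
proof -
  have len: "length x = s - 1" using x by (simp add: cube_def)
  have b: "x ! (i-1) \<le> 1" using cube_le1[OF x] i len by simp
  have lm: "length (mk s x i) = s" using len i by (simp add: mk_def)
  have v: "1 - x ! (i-1) \<in> {0, 1}" using b by auto
  have "set (take i x) \<subseteq> {0, 1}" using x set_take_subset[of i x] unfolding cube_def by blast
  then show c: "mk s x i \<in> cube s"
    using lm v unfolding cube_def mk_def by auto
  have nth1: "coord (mk s x i) j = coord x j" if j: "1 \<le> j" "j \<le> i" for j
  proof -
    have "j - 1 < i" "j - 1 < length x" using j i len by auto
    then show ?thesis unfolding mk_def coord_def by (simp add: nth_append)
  qed
  have nth2: "coord (mk s x i) j = 1 - x ! (i - 1)" if j: "i + 1 \<le> j" "j \<le> s" for j
  proof -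
    have "\<not> j - 1 < i" "j - 1 - i < s - i" using j i len by auto
    then show ?thesis unfolding mk_def coord_def using len i by (simp add: nth_append)
  qed
  have "coord (mk s x i) i \<noteq> coord (mk s x i) (i + 1)"
    using nth1[of i] nth2[of "i+1"] i b by (simp add: coord_def, arith)
  then show P: "Ppred (mk s x i) i"
    unfolding Ppred_def lm using i nth2 by auto
  then show t: "tidx (mk s x i) = i" by (rule tidx_eq)
  show "x \<in> Aset (mk s x i)" unfolding Aset_def t lm using x nth1 by auto
  show "weight (mk s x i) = fx s x i"
    unfolding weight_def fx_def mk_def by (simp add: sum_list_replicate)
qed

lemma Aset_mk:
  assumes e: "e \<in> cube s" and w1: "1 \<le> weight e" and w2: "weight e \<le> s - 1"
    and xA: "x \<in> Aset e"
  shows "\<exists>i. 1 \<le> i \<and> i \<le> s - 1 \<and> e = mk s x i"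
proof -
  have len: "length e = s" using e by (simp add: cube_def)
  obtain i where P: "Ppred e i" using Ppred_exists[OF e w1 w2] by blast
  have t: "tidx e = i" using tidx_eq[OF P] .
  have i: "1 \<le> i" "i \<le> s - 1" using P unfolding Ppred_def len by blast+
  have x: "x \<in> cube (s - 1)" and agree: "\<And>j. 1 \<le> j \<Longrightarrow> j \<le> i \<Longrightarrow> coord x j = coord e j"
    using xA unfolding Aset_def t len by auto
  have lx: "length x = s - 1" using x by (simp add: cube_def)
  have tk: "take i x = take i e"
  proof (rule nth_equalityI)
    show "length (take i x) = length (take i e)" using lx len i by simp
  next
    fix n assume "n < length (take i x)"
    then have "n < i" using lx i by simp
    then show "take i x ! n = take i e ! n" using agree[of "Suc n"] by (simp add: coord_def)
  qed
  have "x ! (i-1) = e ! (i-1)" using agree[of i] i by (simp add: coord_def)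
  then have "e = mk s x i" using Ppred_shape[OF e P] tk by (simp add: mk_def)
  then show ?thesis using i by blast
qed

abbreviation S :: "nat list \<Rightarrow> nat \<Rightarrow> nat" where "S x n \<equiv> sum_list (take n x)"

lemma S_Suc: "n < length x \<Longrightarrow> S x (Suc n) = S x n + x ! n"
  by (simp add: take_Suc_conv_app_nth)

lemma S_mono:
  assumes x: "x \<in> cube m" and "i \<le> j" "j \<le> length x"
  shows "S x i \<le> S x j \<and> S x j \<le> S x i + (j - i)"
  using assms(2,3)
proof (induction j)
  case 0 then show ?case by simp
next
  case (Suc j)
  show ?case
  proof (cases "i = Suc j")
    case True then show ?thesis by simp
  next
    case False
    then have "i \<le> j" using Suc by simp
    have "x ! j \<le> 1" using cube_le1[OF x] Suc by simp
    then show ?thesis using Suc.IH[OF \<open>i \<le> j\<close>] Suc.prems S_Suc[of j x] \<open>i \<le> j\<close> by auto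
  qed
qed

lemma fx_range:
  assumes x: "x \<in> cube (s - 1)" and i: "1 \<le> i" "i \<le> s - 1"
  shows "1 \<le> fx s x i \<and> fx s x i \<le> s - 1"
proof -
  have lx: "length x = s - 1" using x by (simp add: cube_def)
  have b: "x ! (i-1) \<le> 1" using cube_le1[OF x] i lx by simp
  have e: "S x i = S x (i - 1) + x ! (i - 1)" using S_Suc[of "i-1" x] i lx by simp
  have "S x (i-1) \<le> S x 0 + (i - 1 - 0)" using S_mono[OF x, of 0 "i-1"] i lx by simp
  then have "S x (i-1) \<le> i - 1" by simp
  then show ?thesis using e b i unfolding fx_def
    by (cases "x ! (i - 1)") auto
qed

lemma fx_inj_aux:
  assumes x: "x \<in> cube (s - 1)" and ij: "1 \<le> i" "i < j" "j \<le> s - 1"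
  shows "fx s x i \<noteq> fx s x j"
proof -
  have lx: "length x = s - 1" using x by (simp add: cube_def)
  have bi: "x ! (i-1) \<le> 1" using cube_le1[OF x] ij lx by simp
  have bj: "x ! (j-1) \<le> 1" using cube_le1[OF x] ij lx by simp
  have ej: "S x j = S x (j - 1) + x ! (j - 1)" using S_Suc[of "j-1" x] ij lx by simp
  have m: "S x i \<le> S x (j-1) \<and> S x (j-1) \<le> S x i + (j - 1 - i)"
    using S_mono[OF x, of i "j-1"] ij lx by simp
  show ?thesis using ej m bi bj ij unfolding fx_def
    by (cases "x ! (i - 1)"; cases "x ! (j - 1)") auto
qed

lemma fx_inj:
  assumes x: "x \<in> cube (s - 1)"
  shows "inj_on (fx s x) {1..s-1}"
  unfolding inj_on_def
  using fx_inj_aux[OF x] by (metis atLeastAtMost_iff linorder_neqE_nat)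

lemma fx_surj:
  assumes x: "x \<in> cube (s - 1)"
  shows "fx s x ` {1..s-1} = {1..s-1}"
proof -
  have sub: "fx s x ` {1..s-1} \<subseteq> {1..s-1}" using fx_range[OF x] by auto
  have "card (fx s x ` {1..s-1}) = card {1..s-1::nat}" using card_image[OF fx_inj[OF x]] .
  then show ?thesis using sub by (simp add: card_subset_eq)
qed

theorem lemma1:
  fixes s k :: nat
  assumes "s > 1" and "1 \<le> k" and "k \<le> s - 1"
  shows "(\<Union>e\<in>{e \<in> cube s. weight e = k}. Aset e) = cube (s - 1)
    \<and> (\<forall>e\<in>{e \<in> cube s. weight e = k}. \<forall>g\<in>{e \<in> cube s. weight e = k}.
          e \<noteq> g \<longrightarrow> Aset e \<inter> Aset g = {})"
proof (intro conjI)
  show "(\<Union>e\<in>{e \<in> cube s. weight e = k}. Aset e) = cube (s - 1)"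
  proof
    show "(\<Union>e\<in>{e \<in> cube s. weight e = k}. Aset e) \<subseteq> cube (s - 1)"
    proof
      fix x assume "x \<in> (\<Union>e\<in>{e \<in> cube s. weight e = k}. Aset e)"
      then obtain e where "e \<in> cube s" "x \<in> Aset e" by auto
      then show "x \<in> cube (s - 1)" unfolding Aset_def cube_def by auto
    qed
  next
    show "cube (s - 1) \<subseteq> (\<Union>e\<in>{e \<in> cube s. weight e = k}. Aset e)"
    proof
      fix x assume x: "x \<in> cube (s - 1)"
      have "k \<in> fx s x ` {1..s-1}" using fx_surj[OF x] assms by auto
      then obtain i where i: "1 \<le> i" "i \<le> s - 1" "fx s x i = k" by auto
      note mp = mk_props[OF x i(1,2)]
      show "x \<in> (\<Union>e\<in>{e \<in> cube s. weight e = k}. Aset e)"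
        using mp i by blast
    qed
  qed
next
  show "\<forall>e\<in>{e \<in> cube s. weight e = k}. \<forall>g\<in>{e \<in> cube s. weight e = k}.
          e \<noteq> g \<longrightarrow> Aset e \<inter> Aset g = {}"
  proof (intro ballI impI)
    fix e g assume e: "e \<in> {e \<in> cube s. weight e = k}" and g: "g \<in> {e \<in> cube s. weight e = k}"
      and ne: "e \<noteq> g"
    show "Aset e \<inter> Aset g = {}"
    proof (rule ccontr)
      assume "Aset e \<inter> Aset g \<noteq> {}"
      then obtain x where xe: "x \<in> Aset e" and xg: "x \<in> Aset g" by auto
      have x: "x \<in> cube (s - 1)" using xe unfolding Aset_def using e by (auto simp: cube_def)
      obtain i where i: "1 \<le> i" "i \<le> s - 1" "e = mk s x i"
        using Aset_mk[of e s x] e xe assms by auto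
      obtain j where j: "1 \<le> j" "j \<le> s - 1" "g = mk s x j"
        using Aset_mk[of g s x] g xg assms by auto
      have "fx s x i = k" using mk_props(5)[OF x i(1,2)] i e by simp
      moreover have "fx s x j = k" using mk_props(5)[OF x j(1,2)] j g by simp
      ultimately have "i = j" using fx_inj[OF x] i j unfolding inj_on_def by auto
      then show False using ne i j by simp
    qed
  qed
qed

end
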